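(* If $G$ is a connected bipartite graph, then $\mathrm{GP}(G)$ is an integer.
   Context: All graphs are simple and finite. For a connected graph $G$, $d_G(u,v)$ denotes the shortest-path distance and $\mathrm{Aut}(G)$ the automorphism group. The Graovac-Pisanski index is $$\mathrm{GP}(G)=\frac{|V(G)|}{2|\mathrm{Aut}(G)|}\sum_{u\in V(G)}\sum_{\alpha\in \mathrm{Aut}(G)} d_G(u,\alpha(u)).$$ *)

theory Defs
  imports Complex_Main
begin

definition simple_graph :: "'a set \<Rightarrow> ('a \<Rightarrow> 'a \<Rightarrow> bool) \<Rightarrow> bool" where
  "simple_graph V E \<longleftrightarrow> finite V \<and> (\<forall>u v. E u v \<longrightarrow> u \<in> V \<and> v \<in> V)
     \<and> (\<forall>u v. E u v \<longrightarrow> E v u) \<and> (\<forall>u. \<not> E u u)"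

definition is_walk :: "'a set \<Rightarrow> ('a \<Rightarrow> 'a \<Rightarrow> bool) \<Rightarrow> 'a list \<Rightarrow> bool" where
  "is_walk V E xs \<longleftrightarrow> xs \<noteq> [] \<and> set xs \<subseteq> V
     \<and> (\<forall>i. Suc i < length xs \<longrightarrow> E (xs ! i) (xs ! Suc i))"

definition graph_connected :: "'a set \<Rightarrow> ('a \<Rightarrow> 'a \<Rightarrow> bool) \<Rightarrow> bool" where
  "graph_connected V E \<longleftrightarrow> V \<noteq> {} \<and>
     (\<forall>u\<in>V. \<forall>v\<in>V. \<exists>xs. is_walk V E xs \<and> hd xs = u \<and> last xs = v)"

definition gdist :: "'a set \<Rightarrow> ('a \<Rightarrow> 'a \<Rightarrow> bool) \<Rightarrow> 'a \<Rightarrow> 'a \<Rightarrow> nat" where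
  "gdist V E u v = (LEAST n. \<exists>xs. is_walk V E xs \<and> hd xs = u \<and> last xs = v \<and> length xs = Suc n)"

definition bipartite :: "'a set \<Rightarrow> ('a \<Rightarrow> 'a \<Rightarrow> bool) \<Rightarrow> bool" where
  "bipartite V E \<longleftrightarrow> (\<exists>A \<subseteq> V. \<forall>u v. E u v \<longrightarrow> (u \<in> A \<longleftrightarrow> v \<notin> A))"

text \<open>Automorphisms, represented as extensional bijections (identity outside V).\<close>
definition Aut :: "'a set \<Rightarrow> ('a \<Rightarrow> 'a \<Rightarrow> bool) \<Rightarrow> ('a \<Rightarrow> 'a) set" where
  "Aut V E = {f. bij_betw f V V \<and> (\<forall>x. x \<notin> V \<longrightarrow> f x = x)
                 \<and> (\<forall>u\<in>V. \<forall>v\<in>V. E u v \<longleftrightarrow> E (f u) (f v))}"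

definition GP :: "'a set \<Rightarrow> ('a \<Rightarrow> 'a \<Rightarrow> bool) \<Rightarrow> real" where
  "GP V E = real (card V) / (2 * real (card (Aut V E)))
     * (\<Sum>u\<in>V. \<Sum>\<alpha>\<in>Aut V E. real (gdist V E u (\<alpha> u)))"

end

theory Submission
  imports Defs "HOL-Library.FuncSet"
begin

lemma walk_Cons2: "is_walk V E (x#y#xs) \<longleftrightarrow> x \<in> V \<and> E x y \<and> is_walk V E (y#xs)"
proof
  assume h: "is_walk V E (x#y#xs)"
  have "E x y" using h unfolding is_walk_def by (metis length_Cons nth_Cons_0 nth_Cons_Suc zero_less_Suc Suc_less_eq)
  moreover have "is_walk V E (y#xs)" unfolding is_walk_def
  proof (intro conjI allI impI)
    fix i assume "Suc i < length (y#xs)"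
    then have "Suc (Suc i) < length (x#y#xs)" by simp
    then show "E ((y#xs) ! i) ((y#xs) ! Suc i)" using h unfolding is_walk_def by fastforce
  qed (use h in \<open>auto simp: is_walk_def\<close>)
  ultimately show "x \<in> V \<and> E x y \<and> is_walk V E (y#xs)" using h by (auto simp: is_walk_def)
next
  assume h: "x \<in> V \<and> E x y \<and> is_walk V E (y#xs)"
  show "is_walk V E (x#y#xs)" unfolding is_walk_def
  proof (intro conjI allI impI)
    fix i assume i: "Suc i < length (x#y#xs)"
    show "E ((x#y#xs) ! i) ((x#y#xs) ! Suc i)"
    proof (cases i)
      case 0 then show ?thesis using h by simp
    next
      case (Suc j) then show ?thesis using h i unfolding is_walk_def by auto
    qed
  qed (use h in \<open>auto simp: is_walk_def\<close>)
qed

lemma walk_parity: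
  assumes "is_walk V E xs" "\<forall>u v. E u v \<longrightarrow> (u \<in> A \<longleftrightarrow> v \<notin> A)"
  shows "odd (length xs) \<longleftrightarrow> (hd xs \<in> A \<longleftrightarrow> last xs \<in> A)"
  using assms(1)
proof (induction xs rule: induct_list012)
  case 1 then show ?case by (simp add: is_walk_def)
next
  case (2 x) then show ?case by simp
next
  case (3 x y zs)
  then have w: "x \<in> V" "E x y" "is_walk V E (y#zs)" by (auto simp: walk_Cons2)
  have "odd (length (y#zs)) \<longleftrightarrow> (y \<in> A \<longleftrightarrow> last (y#zs) \<in> A)" using 3 w by simp
  moreover have "x \<in> A \<longleftrightarrow> y \<notin> A" using w assms(2) by blast
  ultimately show ?case by auto
qed

locale gpg =
  fixes V :: "'a set" and E :: "'a \<Rightarrow> 'a \<Rightarrow> bool"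
  assumes simple: "simple_graph V E" and conn: "graph_connected V E"
begin

lemma finV: "finite V" using simple by (simp add: simple_graph_def)
lemma inV: "E u v \<Longrightarrow> u \<in> V \<and> v \<in> V" using simple by (simp add: simple_graph_def)

lemma dist_walk:
  assumes "u \<in> V" "v \<in> V"
  shows "\<exists>xs. is_walk V E xs \<and> hd xs = u \<and> last xs = v \<and> length xs = Suc (gdist V E u v)"
proof -
  obtain xs where xs: "is_walk V E xs" "hd xs = u" "last xs = v"
    using conn assms unfolding graph_connected_def by blast
  then have "length xs = Suc (length xs - 1)" by (cases xs) (auto simp: is_walk_def)
  then have "\<exists>n. \<exists>xs. is_walk V E xs \<and> hd xs = u \<and> last xs = v \<and> length xs = Suc n" using xs by blast
  from LeastI_ex[OF this] show ?thesis unfolding gdist_def .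
qed

lemma dist_le:
  assumes "is_walk V E xs"
  shows "gdist V E (hd xs) (last xs) \<le> length xs - 1"
proof -
  have "length xs = Suc (length xs - 1)" using assms by (cases xs) (auto simp: is_walk_def)
  then show ?thesis unfolding gdist_def using assms by (intro Least_le) blast
qed

lemma aut_V: "\<alpha> \<in> Aut V E \<Longrightarrow> x \<in> V \<Longrightarrow> \<alpha> x \<in> V"
  unfolding Aut_def using bij_betw_apply by fastforce
lemma aut_out: "\<alpha> \<in> Aut V E \<Longrightarrow> x \<notin> V \<Longrightarrow> \<alpha> x = x"
  unfolding Aut_def by blast
lemma aut_E: "\<alpha> \<in> Aut V E \<Longrightarrow> u \<in> V \<Longrightarrow> v \<in> V \<Longrightarrow> E (\<alpha> u) (\<alpha> v) \<longleftrightarrow> E u v"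
  unfolding Aut_def by blast
lemma aut_bij: "\<alpha> \<in> Aut V E \<Longrightarrow> bij_betw \<alpha> V V"
  unfolding Aut_def by blast
lemma aut_inj: "\<alpha> \<in> Aut V E \<Longrightarrow> inj_on \<alpha> V"
  using aut_bij bij_betw_def by blast

lemma id_aut: "(\<lambda>x. x) \<in> Aut V E"
  unfolding Aut_def by (simp add: bij_betw_def)

lemma comp_aut: assumes a: "\<alpha> \<in> Aut V E" and b: "\<beta> \<in> Aut V E" shows "\<alpha> \<circ> \<beta> \<in> Aut V E"
proof -
  have "bij_betw (\<alpha> \<circ> \<beta>) V V" using aut_bij[OF a] aut_bij[OF b] by (rule bij_betw_trans[rotated])
  moreover have "\<forall>x. x \<notin> V \<longrightarrow> (\<alpha> \<circ> \<beta>) x = x" using aut_out[OF a] aut_out[OF b] by simp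
  moreover have "\<forall>u\<in>V. \<forall>v\<in>V. E u v \<longleftrightarrow> E ((\<alpha> \<circ> \<beta>) u) ((\<alpha> \<circ> \<beta>) v)"
    using aut_E[OF a] aut_E[OF b] aut_V[OF b] by simp
  ultimately show ?thesis unfolding Aut_def by blast
qed

definition ainv where "ainv \<alpha> = (\<lambda>x. if x \<in> V then inv_into V \<alpha> x else x)"

lemma ainv_left: assumes a: "\<alpha> \<in> Aut V E" shows "ainv \<alpha> (\<alpha> x) = x"
proof (cases "x \<in> V")
  case True
  then show ?thesis unfolding ainv_def using aut_V[OF a True] inv_into_f_f[OF aut_inj[OF a] True] by simp
next
  case False
  then show ?thesis unfolding ainv_def using aut_out[OF a False] by simp
qed

lemma ainv_right: assumes a: "\<alpha> \<in> Aut V E" shows "\<alpha> (ainv \<alpha> x) = x"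
proof (cases "x \<in> V")
  case True
  have "\<alpha> ` V = V" using aut_bij[OF a] by (simp add: bij_betw_def)
  then have "x \<in> \<alpha> ` V" using True by simp
  from f_inv_into_f[OF this] show ?thesis unfolding ainv_def using True by simp
next
  case False
  then show ?thesis unfolding ainv_def using aut_out[OF a False] by simp
qed

lemma ainv_aut: assumes a: "\<alpha> \<in> Aut V E" shows "ainv \<alpha> \<in> Aut V E"
proof -
  have b: "bij_betw (inv_into V \<alpha>) V V" using aut_bij[OF a] by (metis bij_betw_inv_into)
  have c: "bij_betw (ainv \<alpha>) V V"
    using b by (rule bij_betw_cong[THEN iffD1, rotated]) (simp add: ainv_def)
  have iv: "x \<in> V \<Longrightarrow> ainv \<alpha> x \<in> V" for x using c bij_betw_apply by metis
  have "E u v \<longleftrightarrow> E (ainv \<alpha> u) (ainv \<alpha> v)" if "u \<in> V" "v \<in> V" for u v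
    using aut_E[OF a iv[OF that(1)] iv[OF that(2)]] ainv_right[OF a] by simp
  moreover have "\<forall>x. x \<notin> V \<longrightarrow> ainv \<alpha> x = x" by (simp add: ainv_def)
  ultimately show ?thesis using c unfolding Aut_def by blast
qed

lemma walk_map: "\<alpha> \<in> Aut V E \<Longrightarrow> is_walk V E xs \<Longrightarrow> is_walk V E (map \<alpha> xs)"
proof -
  assume a: "\<alpha> \<in> Aut V E" and w: "is_walk V E xs"
  have "set (map \<alpha> xs) \<subseteq> V" using w aut_V[OF a] by (auto simp: is_walk_def)
  moreover have "E (map \<alpha> xs ! i) (map \<alpha> xs ! Suc i)" if i: "Suc i < length (map \<alpha> xs)" for i
  proof -
    have e: "E (xs ! i) (xs ! Suc i)" using w i by (simp add: is_walk_def)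
    have "E (\<alpha> (xs ! i)) (\<alpha> (xs ! Suc i))" using aut_E[OF a] inV[OF e] e by blast
    then show ?thesis using i by simp
  qed
  ultimately show ?thesis using w by (simp add: is_walk_def)
qed

lemma dist_aut_le:
  assumes a: "\<alpha> \<in> Aut V E" and "u \<in> V" "v \<in> V"
  shows "gdist V E (\<alpha> u) (\<alpha> v) \<le> gdist V E u v"
proof -
  obtain xs where xs: "is_walk V E xs" "hd xs = u" "last xs = v" "length xs = Suc (gdist V E u v)"
    using dist_walk[OF assms(2,3)] by blast
  have ne: "xs \<noteq> []" using xs(1) by (simp add: is_walk_def)
  have "gdist V E (hd (map \<alpha> xs)) (last (map \<alpha> xs)) \<le> length (map \<alpha> xs) - 1"
    by (rule dist_le[OF walk_map[OF a xs(1)]])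
  moreover have "hd (map \<alpha> xs) = \<alpha> u" using ne xs(2) by (simp add: hd_map)
  moreover have "last (map \<alpha> xs) = \<alpha> v" using ne xs(3) by (simp add: last_map)
  moreover have "length (map \<alpha> xs) - 1 = gdist V E u v" using xs(4) by simp
  ultimately show ?thesis by simp
qed

lemma dist_aut:
  assumes a: "\<alpha> \<in> Aut V E" and "u \<in> V" "v \<in> V"
  shows "gdist V E (\<alpha> u) (\<alpha> v) = gdist V E u v"
proof -
  have "gdist V E (ainv \<alpha> (\<alpha> u)) (ainv \<alpha> (\<alpha> v)) \<le> gdist V E (\<alpha> u) (\<alpha> v)"
    by (rule dist_aut_le[OF ainv_aut[OF a] aut_V[OF a assms(2)] aut_V[OF a assms(3)]])
  then show ?thesis using dist_aut_le[OF assms] ainv_left[OF a] by simp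
qed

lemma fin_aut: "finite (Aut V E)"
proof -
  let ?r = "\<lambda>\<alpha> x. if x \<in> V then \<alpha> x else undefined"
  have inj: "inj_on ?r (Aut V E)"
  proof (rule inj_onI)
    fix a b assume a: "a \<in> Aut V E" and b: "b \<in> Aut V E" and eq: "?r a = ?r b"
    show "a = b"
    proof (rule ext)
      fix x show "a x = b x"
      proof (cases "x \<in> V")
        case True then show ?thesis using fun_cong[OF eq, of x] by simp
      next
        case False then show ?thesis using aut_out[OF a False] aut_out[OF b False] by simp
      qed
    qed
  qed
  have sub: "?r ` Aut V E \<subseteq> {f. \<forall>x. (x \<in> V \<longrightarrow> f x \<in> V) \<and> (x \<notin> V \<longrightarrow> f x = undefined)}"
  proof
    fix f assume "f \<in> ?r ` Aut V E"
    then obtain a where a: "a \<in> Aut V E" and f: "f = ?r a" by blast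
    show "f \<in> {f. \<forall>x. (x \<in> V \<longrightarrow> f x \<in> V) \<and> (x \<notin> V \<longrightarrow> f x = undefined)}"
      using aut_V[OF a] f by simp
  qed
  have "finite (?r ` Aut V E)"
    by (rule finite_subset[OF sub finite_set_of_finite_funs[OF finV finV]])
  then show ?thesis using inj by (rule finite_imageD)
qed

definition orb where "orb u = (\<lambda>\<alpha>. \<alpha> u) ` Aut V E"
definition fib where "fib u v = {\<alpha> \<in> Aut V E. \<alpha> u = v}"
definition tt where "tt u = (\<Sum>v\<in>orb u. gdist V E u v)"

lemma orb_sub: "u \<in> V \<Longrightarrow> orb u \<subseteq> V"
  unfolding orb_def using aut_V by blast

lemma fin_orb: "finite (orb u)"
  unfolding orb_def using fin_aut by (rule finite_imageI)

lemma self_orb: "u \<in> orb u"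
  unfolding orb_def using id_aut by (rule rev_image_eqI) simp

lemma orb_eq: assumes "v \<in> orb u" shows "orb v = orb u"
proof -
  obtain \<beta> where b: "\<beta> \<in> Aut V E" and v: "v = \<beta> u" using assms unfolding orb_def by blast
  show ?thesis
  proof
    show "orb v \<subseteq> orb u"
    proof
      fix w assume "w \<in> orb v"
      then obtain \<alpha> where a: "\<alpha> \<in> Aut V E" and w: "w = \<alpha> v" unfolding orb_def by blast
      have "w = (\<alpha> \<circ> \<beta>) u" using w v by simp
      then show "w \<in> orb u" unfolding orb_def using comp_aut[OF a b] by blast
    qed
  next
    show "orb u \<subseteq> orb v"
    proof
      fix w assume "w \<in> orb u"
      then obtain \<alpha> where a: "\<alpha> \<in> Aut V E" and w: "w = \<alpha> u" unfolding orb_def by blast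
      have "w = (\<alpha> \<circ> ainv \<beta>) v" using w v ainv_left[OF b] by simp
      then show "w \<in> orb v" unfolding orb_def using comp_aut[OF a ainv_aut[OF b]] by blast
    qed
  qed
qed

lemma fib_card: assumes "v \<in> orb u" shows "card (fib u v) = card (fib u u)"
proof -
  obtain \<beta> where b: "\<beta> \<in> Aut V E" and v: "v = \<beta> u" using assms unfolding orb_def by blast
  have "bij_betw (\<lambda>\<gamma>. \<beta> \<circ> \<gamma>) (fib u u) (fib u v)"
  proof (rule bij_betw_byWitness[where f' = "\<lambda>\<alpha>. ainv \<beta> \<circ> \<alpha>"])
    show "\<forall>a\<in>fib u u. ainv \<beta> \<circ> (\<beta> \<circ> a) = a" using ainv_left[OF b] by (simp add: comp_def)
    show "\<forall>a\<in>fib u v. \<beta> \<circ> (ainv \<beta> \<circ> a) = a" using ainv_right[OF b] by (simp add: comp_def)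
    show "(\<circ>) \<beta> ` fib u u \<subseteq> fib u v"
      unfolding fib_def using comp_aut[OF b] v by auto
    show "(\<circ>) (ainv \<beta>) ` fib u v \<subseteq> fib u u"
      unfolding fib_def using comp_aut[OF ainv_aut[OF b]] v ainv_left[OF b] by auto
  qed
  then show ?thesis by (metis bij_betw_same_card)
qed

lemma card_aut: "card (Aut V E) = card (orb u) * card (fib u u)"
proof -
  have "(\<Sum>v\<in>orb u. \<Sum>x\<in>{x. x \<in> Aut V E \<and> x u = v}. (1::nat)) = (\<Sum>x\<in>Aut V E. 1)"
    by (rule sum.group[OF fin_aut fin_orb]) (auto simp: orb_def)
  then have "card (Aut V E) = (\<Sum>v\<in>orb u. card (fib u v))" by (simp add: fib_def)
  also have "\<dots> = (\<Sum>v\<in>orb u. card (fib u u))" by (rule sum.cong) (simp_all add: fib_card)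
  finally show ?thesis by simp
qed

lemma sum_aut: "(\<Sum>\<alpha>\<in>Aut V E. real (gdist V E u (\<alpha> u))) = real (card (fib u u)) * real (tt u)"
proof -
  have "(\<Sum>v\<in>orb u. \<Sum>x\<in>{x. x \<in> Aut V E \<and> x u = v}. real (gdist V E u (x u)))
        = (\<Sum>\<alpha>\<in>Aut V E. real (gdist V E u (\<alpha> u)))"
    by (rule sum.group[OF fin_aut fin_orb]) (auto simp: orb_def)
  moreover have "(\<Sum>x\<in>{x. x \<in> Aut V E \<and> x u = v}. real (gdist V E u (x u)))
        = real (card (fib u u)) * real (gdist V E u v)" if "v \<in> orb u" for v
  proof -
    have "(\<Sum>x\<in>{x. x \<in> Aut V E \<and> x u = v}. real (gdist V E u (x u)))
          = (\<Sum>x\<in>fib u v. real (gdist V E u v))" by (rule sum.cong) (auto simp: fib_def)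
    also have "\<dots> = real (card (fib u v)) * real (gdist V E u v)" by simp
    finally show ?thesis using fib_card[OF that] by simp
  qed
  ultimately have "(\<Sum>\<alpha>\<in>Aut V E. real (gdist V E u (\<alpha> u)))
      = (\<Sum>v\<in>orb u. real (card (fib u u)) * real (gdist V E u v))" by (metis (no_types, lifting) sum.cong)
  also have "\<dots> = real (card (fib u u)) * real (tt u)" by (simp add: tt_def sum_distrib_left)
  finally show ?thesis .
qed

lemma tt_const: assumes u: "u \<in> V" and "v \<in> orb u" shows "tt v = tt u"
proof -
  obtain \<beta> where b: "\<beta> \<in> Aut V E" and v: "v = \<beta> u" using assms unfolding orb_def by blast
  have ov: "orb v = orb u" by (rule orb_eq[OF assms(2)])
  have bij: "bij_betw \<beta> (orb u) (orb u)"
  proof (rule bij_betw_byWitness[where f' = "ainv \<beta>"])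
    show "\<forall>a\<in>orb u. ainv \<beta> (\<beta> a) = a" using ainv_left[OF b] by simp
    show "\<forall>a\<in>orb u. \<beta> (ainv \<beta> a) = a" using ainv_right[OF b] by simp
    show "\<beta> ` orb u \<subseteq> orb u"
    proof
      fix w assume "w \<in> \<beta> ` orb u"
      then obtain \<alpha> where a: "\<alpha> \<in> Aut V E" and w: "w = \<beta> (\<alpha> u)" unfolding orb_def by blast
      have "w = (\<beta> \<circ> \<alpha>) u" using w by simp
      then show "w \<in> orb u" unfolding orb_def using comp_aut[OF b a] by blast
    qed
    show "ainv \<beta> ` orb u \<subseteq> orb u"
    proof
      fix w assume "w \<in> ainv \<beta> ` orb u"
      then obtain \<alpha> where a: "\<alpha> \<in> Aut V E" and w: "w = ainv \<beta> (\<alpha> u)" unfolding orb_def by blast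
      have "w = (ainv \<beta> \<circ> \<alpha>) u" using w by simp
      then show "w \<in> orb u" unfolding orb_def using comp_aut[OF ainv_aut[OF b] a] by blast
    qed
  qed
  have "tt v = (\<Sum>w\<in>orb u. gdist V E (\<beta> u) w)" unfolding tt_def ov by (simp add: v)
  also have "\<dots> = (\<Sum>w\<in>orb u. gdist V E (\<beta> u) (\<beta> w))"
    by (rule sum.reindex_bij_betw[OF bij, symmetric])
  also have "\<dots> = (\<Sum>w\<in>orb u. gdist V E u w)"
    by (rule sum.cong) (use dist_aut[OF b u] orb_sub[OF u] in auto)
  finally show ?thesis by (simp add: tt_def)
qed

lemma card_orb_pos: "card (orb u) > 0"
  using fin_orb self_orb by (metis card_gt_0_iff empty_iff)

lemma GP_eq: "GP V E = real (card V) / 2 * (\<Sum>u\<in>V. real (tt u) / real (card (orb u)))"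
proof -
  have N: "real (card (Aut V E)) > 0" using fin_aut id_aut by (simp add: card_gt_0_iff) blast
  have "(\<Sum>u\<in>V. \<Sum>\<alpha>\<in>Aut V E. real (gdist V E u (\<alpha> u)))
        = (\<Sum>u\<in>V. real (card (Aut V E)) * (real (tt u) / real (card (orb u))))"
  proof (rule sum.cong)
    fix u assume "u \<in> V"
    have c: "real (card (Aut V E)) = real (card (orb u)) * real (card (fib u u))"
      using card_aut[of u] by simp
    have p: "real (card (orb u)) > 0" using card_orb_pos by simp
    show "(\<Sum>\<alpha>\<in>Aut V E. real (gdist V E u (\<alpha> u))) = real (card (Aut V E)) * (real (tt u) / real (card (orb u)))"
      unfolding sum_aut c using p by (simp add: field_simps)
  qed simp
  also have "\<dots> = real (card (Aut V E)) * (\<Sum>u\<in>V. real (tt u) / real (card (orb u)))"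
    by (rule sum_distrib_left[symmetric])
  finally show ?thesis unfolding GP_def using N by (simp add: field_simps)
qed

definition rep where "rep Ob = (SOME w. w \<in> V \<and> orb w = Ob)"

lemma group_sum: "(\<Sum>u\<in>V. real (tt u) / real (card (orb u))) = real (\<Sum>Ob\<in>orb ` V. tt (rep Ob))"
proof -
  have "(\<Sum>Ob\<in>orb ` V. \<Sum>u\<in>{u. u \<in> V \<and> orb u = Ob}. real (tt u) / real (card (orb u)))
        = (\<Sum>u\<in>V. real (tt u) / real (card (orb u)))"
    by (rule sum.group[OF finV]) (use finV in auto)
  moreover have "(\<Sum>u\<in>{u. u \<in> V \<and> orb u = Ob}. real (tt u) / real (card (orb u))) = real (tt (rep Ob))"
    if "Ob \<in> orb ` V" for Ob
  proof -
    have "\<exists>w. w \<in> V \<and> orb w = Ob" using that by blast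
    then have w: "rep Ob \<in> V" "orb (rep Ob) = Ob" unfolding rep_def by (metis (mono_tags, lifting) someI_ex)+
    define w where "w = rep Ob"
    have set: "{u. u \<in> V \<and> orb u = Ob} = orb w"
    proof
      show "{u. u \<in> V \<and> orb u = Ob} \<subseteq> orb w" using self_orb w by (auto simp: w_def)
      show "orb w \<subseteq> {u. u \<in> V \<and> orb u = Ob}"
      proof
        fix x assume x: "x \<in> orb w"
        have "x \<in> V" using orb_sub[OF w(1)] x w_def by blast
        moreover have "orb x = Ob" using orb_eq[OF x] w(2) w_def by simp
        ultimately show "x \<in> {u. u \<in> V \<and> orb u = Ob}" by simp
      qed
    qed
    have "(\<Sum>u\<in>orb w. real (tt u) / real (card (orb u))) = (\<Sum>u\<in>orb w. real (tt w) / real (card (orb w)))"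
    proof (rule sum.cong)
      fix u assume u: "u \<in> orb w"
      have w1: "w \<in> V" using w(1) w_def by simp
      show "real (tt u) / real (card (orb u)) = real (tt w) / real (card (orb w))"
        using tt_const[OF w1 u] orb_eq[OF u] by simp
    qed simp
    also have "\<dots> = real (tt w)" using card_orb_pos[of w] by simp
    finally show ?thesis using set by (simp add: w_def)
  qed
  ultimately show ?thesis by (simp add: of_nat_sum)
qed

lemma rep_V: "Ob \<in> orb ` V \<Longrightarrow> rep Ob \<in> V"
proof -
  assume "Ob \<in> orb ` V"
  then have "\<exists>w. w \<in> V \<and> orb w = Ob" by blast
  then show ?thesis unfolding rep_def by (metis (mono_tags, lifting) someI_ex)
qed

context
  fixes A assumes AV: "A \<subseteq> V" and bip: "\<forall>u v. E u v \<longrightarrow> (u \<in> A \<longleftrightarrow> v \<notin> A)"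
begin

lemma par_dist: assumes "u \<in> V" "v \<in> V" shows "even (gdist V E u v) \<longleftrightarrow> (u \<in> A \<longleftrightarrow> v \<in> A)"
proof -
  obtain xs where xs: "is_walk V E xs" "hd xs = u" "last xs = v" "length xs = Suc (gdist V E u v)"
    using dist_walk[OF assms] by blast
  show ?thesis using walk_parity[OF xs(1) bip] xs by simp
qed

lemma even_aut: assumes n: "odd (card V)" and a: "\<alpha> \<in> Aut V E" and u: "u \<in> V"
  shows "even (gdist V E u (\<alpha> u))"
proof (rule ccontr)
  assume "\<not> even (gdist V E u (\<alpha> u))"
  then have pu: "(u \<in> A) \<noteq> (\<alpha> u \<in> A)" using par_dist[OF u aut_V[OF a u]] by simp
  have sw: "\<alpha> x \<in> A \<longleftrightarrow> x \<notin> A" if x: "x \<in> V" for x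
  proof -
    have "(x \<in> A \<longleftrightarrow> u \<in> A) \<longleftrightarrow> (\<alpha> x \<in> A \<longleftrightarrow> \<alpha> u \<in> A)"
      using par_dist[OF x u] par_dist[OF aut_V[OF a x] aut_V[OF a u]] dist_aut[OF a x u] by simp
    then show ?thesis using pu by blast
  qed
  have fV: "finite V" by (rule finV)
  have i1: "\<alpha> ` A \<subseteq> V - A" using sw AV aut_V[OF a] by blast
  have i2: "\<alpha> ` (V - A) \<subseteq> A" using sw aut_V[OF a] by blast
  have inj: "inj_on \<alpha> V" by (rule aut_inj[OF a])
  have "card A \<le> card (V - A)"
    by (rule card_inj_on_le[OF inj_on_subset[OF inj AV] i1]) (use fV in simp)
  moreover have "card (V - A) \<le> card A"
    by (rule card_inj_on_le[OF inj_on_subset[OF inj] i2]) (use fV AV finite_subset in auto)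
  moreover have "card (V - A) = card V - card A" using card_Diff_subset[OF finite_subset[OF AV fV] AV] .
  moreover have "card A \<le> card V" using card_mono[OF fV AV] .
  ultimately have "card V = 2 * card A" by linarith
  then show False using n by simp
qed

lemma tt_even: "odd (card V) \<Longrightarrow> u \<in> V \<Longrightarrow> even (tt u)"
  unfolding tt_def orb_def by (rule dvd_sum) (auto intro: even_aut)

end

end

theorem theorem3p4:
  fixes V :: "'a set" and E :: "'a \<Rightarrow> 'a \<Rightarrow> bool"
  assumes "simple_graph V E" and "graph_connected V E" and "bipartite V E"
  shows "GP V E \<in> \<int>"
proof -
  interpret gpg V E using assms(1,2) by unfold_locales
  obtain A where AV: "A \<subseteq> V" and bip: "\<forall>u v. E u v \<longrightarrow> (u \<in> A \<longleftrightarrow> v \<notin> A)"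
    using assms(3) unfolding bipartite_def by blast
  define M where "M = (\<Sum>Ob\<in>orb ` V. tt (rep Ob))"
  have eq: "GP V E = real (card V) / 2 * real M"
    unfolding GP_eq group_sum M_def ..
  show ?thesis
  proof (cases "even (card V)")
    case True
    then obtain k where k: "card V = 2 * k" by blast
    have "GP V E = real (k * M)" using eq k by simp
    then show ?thesis by (metis Ints_of_nat)
  next
    case False
    have "even M" unfolding M_def
      by (rule dvd_sum) (use tt_even[OF AV bip False] rep_V in blast)
    then obtain m where m: "M = 2 * m" by blast
    have "GP V E = real (card V * m)" using eq m by simp
    then show ?thesis by (metis Ints_of_nat)
  qed
qed

end
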